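(* Let $m\ge n$, $1\le r\le n$, $\delta=r/n$, $\mu\in[0,1)$, $\tau\in\mathbb{Z}_{\ge1}$, $\eta>0$, and suppose Assumption (A3) holds. Then the error terms $\bm e_t^{(i)}$ of PowerSGD+ with MSGD satisfy, for every $t\ge0$, $$\mathbb{E}\Big\|\frac1N\sum_{i=1}^N\bm e_t^{(i)}\Big\|_F^2\le\frac{45\tau^2G^2}{\delta^2}.$$
   Context: Setting: $N$ nodes jointly minimize $f(\bm{X})=\frac1N\sum_{i=1}^N f_i(\bm{X})$ over $\bm{X}\in\mathbb{R}^{m\times n}$, where $f_i(\bm{X})=\mathbb{E}_{\xi^{(i)}\sim\mathcal{D}_i}[F(\bm{X};\xi^{(i)})]$; node $i$ queries stochastic gradients $\nabla F(\bm{X};\xi^{(i)})$, sampled independently across nodes and iterations. Assumption (A3): $\|\nabla f(\bm{X})\|_F^2\le\omega^2$ for all $\bm X$, and $\mathbb{E}\|\frac1N\sum_{i=1}^N\nabla F(\bm{X};\xi^{(i)})\|_F^2\le G^2:=\sigma^2+\omega^2$ for all $\bm X$, where $\sigma^2$ bounds the variance $\mathbb{E}\|\nabla F(\bm{X};\xi^{(i)})-\nabla f_i(\bm{X})\|_F^2$ for all $i$ and $\bm X$. $\mathrm{QR}(\bm A)$, for $\bm A\in\mathbb{R}^{m\times r}$, denotes the factor $\bm Q\in\mathbb{R}^{m\times r}$ with $\bm Q^\top\bm Q=I_r$ of an economic QR decomposition $\bm A=\bm Q\bm R$. PowerSGD+ with MSGD (step size $\eta$, momentum $\mu$, restart period $\tau$,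 rank $r$): initialize $\bm X_0$, $\bm Q_{-1}\in\mathbb{R}^{n\times r}$, $\bm m_{-1}=0$, $\bm e_0^{(i)}=0$. For $t=0,1,\dots$: each node computes $\bm g_t^{(i)}=\nabla F(\bm X_t;\xi_t^{(i)})$ and $\bm\Delta_t^{(i)}=\bm g_t^{(i)}+\bm e_t^{(i)}$; let $\bm\Delta_t=\frac1N\sum_i\bm\Delta_t^{(i)}$. If $t\not\equiv0\pmod\tau$: $\tilde{\bm P}_t=\mathrm{QR}\big(\frac1N\sum_i\bm\Delta_t^{(i)}\bm Q_{t-1}\big)$; if $t\equiv0\pmod\tau$: $\tilde{\bm P}_t$ is the matrix of the top-$r$ left singular vectors of $\bm\Delta_t$. In both cases $\bm Q_t=\frac1N\sum_i(\bm\Delta_t^{(i)})^\top\tilde{\bm P}_t$, $\widehat{\bm\Delta}_t^{(i)}=\tilde{\bm P}_t\tilde{\bm P}_t^\top\bm\Delta_t^{(i)}$, $\widehat{\bm\Delta}_t=\tilde{\bm P}_t\bm Q_t^\top$, $\bm e_{t+1}^{(i)}=\bm\Delta_t^{(i)}-\widehat{\bm\Delta}_t^{(i)}$, $\bm m_t=\mu\bm m_{t-1}+\widehat{\bm\Delta}_t$, $\bm X_{t+1}=\bm X_t-\eta\bm m_t$. *)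

theory Defs
  imports "HOL-Probability.Probability"
begin

text \<open>Matrices in R^(m x n) are modelled as real^'n^'m (rows indexed by 'm);
  the norm on this type is the Frobenius norm and the inner product is the
  Frobenius inner product. The rank r is the cardinality of the (linearly
  ordered) finite type 'r; m x r matrices are ((real, 'r) vec, 'm) vec.\<close>

definition outer :: "real^'m \<Rightarrow> real^'n \<Rightarrow> real^'n^'m" where
  "outer u v = (\<chi> i j. u$i * v$j)"

definition thin_svd :: "real^'n^'m \<Rightarrow> (nat \<Rightarrow> real) \<Rightarrow> (nat \<Rightarrow> real^'m) \<Rightarrow> (nat \<Rightarrow> real^'n) \<Rightarrow> bool" where
  "thin_svd A s u v \<longleftrightarrow>
     (\<forall>k<CARD('n). \<forall>l<CARD('n).
        u k \<bullet> u l = (if k = l then 1 else 0) \<and> v k \<bullet> v l = (if k = l then 1 else 0)) \<and>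
     (\<forall>k<CARD('n). 0 \<le> s k) \<and>
     (\<forall>k. Suc k < CARD('n) \<longrightarrow> s (Suc k) \<le> s k) \<and>
     A = (\<Sum>k<CARD('n). s k *\<^sub>R outer (u k) (v k))"

definition col_pos :: "'r::{finite,linorder} \<Rightarrow> nat" where
  "col_pos j = card {k. k < j}"

definition top_r_left_sv :: "real^'n^'m \<Rightarrow> ((real, 'r::{finite,linorder}) vec, 'm) vec \<Rightarrow> bool" where
  "top_r_left_sv A P \<longleftrightarrow>
     (\<exists>s u v. thin_svd A s u v \<and> (\<forall>j. column j P = u (col_pos j)))"

definition is_econ_QR :: "((real, 'r::{finite,linorder}) vec, 'm::finite) vec \<Rightarrow> ((real, 'r) vec, 'm) vec \<Rightarrow> bool" where
  "is_econ_QR A Q \<longleftrightarrow> transpose Q ** Q = mat 1 \<and>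
     (\<exists>R. (\<forall>i j. j < i \<longrightarrow> R$i$j = 0) \<and> A = Q ** R)"

text \<open>PowerSGD+ with MSGD. State after t iterations: (X_t, e_t, m_(t-1), Q_(t-1)).
  w (t,i) is the sample xi_t^(i); qrf / svdf are the (deterministic) QR and
  top-r SVD routines.\<close>
primrec psgd ::
  "nat \<Rightarrow> (real^'n^'m \<Rightarrow> 'b \<Rightarrow> real^'n^'m) \<Rightarrow> (((real, 'r::{finite,linorder}) vec, 'm::finite) vec \<Rightarrow> ((real, 'r) vec, 'm) vec) \<Rightarrow>
   (real^'n^'m \<Rightarrow> ((real, 'r) vec, 'm) vec) \<Rightarrow> nat \<Rightarrow> real \<Rightarrow> real \<Rightarrow> real^'n^'m \<Rightarrow> ((real, 'r) vec, 'n) vec \<Rightarrow>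
   (nat \<times> nat \<Rightarrow> 'b) \<Rightarrow> nat \<Rightarrow>
   (real^'n^'m) \<times> (nat \<Rightarrow> real^'n^'m) \<times> (real^'n^'m) \<times> ((real, 'r) vec, 'n) vec" where
  "psgd N gF qrf svdf \<tau> \<eta> \<mu> X0 Q0 w 0 = (X0, (\<lambda>i. 0), 0, Q0)"
| "psgd N gF qrf svdf \<tau> \<eta> \<mu> X0 Q0 w (Suc t) =
    (case psgd N gF qrf svdf \<tau> \<eta> \<mu> X0 Q0 w t of (X, e, mm, Q) \<Rightarrow>
      let Di = (\<lambda>i. gF X (w (t, i)) + e i);
          Dl = (1 / real N) *\<^sub>R (\<Sum>i<N. Di i);
          P = (if t mod \<tau> = 0 then svdf Dl
               else qrf ((1 / real N) *\<^sub>R (\<Sum>i<N. Di i ** Q)));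
          Qn = (1 / real N) *\<^sub>R (\<Sum>i<N. transpose (Di i) ** P);
          e' = (\<lambda>i. Di i - P ** transpose P ** Di i);
          Dhat = P ** transpose Qn;
          m' = \<mu> *\<^sub>R mm + Dhat;
          X' = X - \<eta> *\<^sub>R m'
      in (X', e', m', Qn))"

definition err where
  "err N gF qrf svdf \<tau> \<eta> \<mu> X0 Q0 w t i = fst (snd (psgd N gF qrf svdf \<tau> \<eta> \<mu> X0 Q0 w t)) i"

end

theory Submission
  imports Defs
begin

lemma mat_inner_eq: "(A::real^'n^'m) \<bullet> B = (\<Sum>i\<in>UNIV. \<Sum>j\<in>UNIV. A$i$j * B$i$j)"
  by (simp add: inner_vec_def)

lemma mat_adj: "((X::real^'k^'m) ** (A::real^'n^'k)) \<bullet> B = A \<bullet> (transpose X ** B)"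
proof -
  have "((X ** A) \<bullet> B) = (\<Sum>i\<in>UNIV. \<Sum>j\<in>UNIV. \<Sum>k\<in>UNIV. X$i$k * A$k$j * B$i$j)"
    by (simp add: mat_inner_eq matrix_matrix_mult_def sum_distrib_right)
  also have "\<dots> = (\<Sum>k\<in>UNIV. \<Sum>j\<in>UNIV. \<Sum>i\<in>UNIV. X$i$k * A$k$j * B$i$j)"
  proof -
    have "\<And>i. (\<Sum>j\<in>UNIV. \<Sum>k\<in>UNIV. X$i$k * A$k$j * B$i$j) = (\<Sum>k\<in>UNIV. \<Sum>j\<in>UNIV. X$i$k * A$k$j * B$i$j)"
      by (rule sum.swap)
    then have "(\<Sum>i\<in>UNIV. \<Sum>j\<in>UNIV. \<Sum>k\<in>UNIV. X$i$k * A$k$j * B$i$j) = (\<Sum>i\<in>UNIV. \<Sum>k\<in>UNIV. \<Sum>j\<in>UNIV. X$i$k * A$k$j * B$i$j)"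
      by simp
    also have "\<dots> = (\<Sum>k\<in>UNIV. \<Sum>i\<in>UNIV. \<Sum>j\<in>UNIV. X$i$k * A$k$j * B$i$j)"
      by (rule sum.swap)
    also have "\<dots> = (\<Sum>k\<in>UNIV. \<Sum>j\<in>UNIV. \<Sum>i\<in>UNIV. X$i$k * A$k$j * B$i$j)"
      by (rule sum.cong[OF refl], rule sum.swap)
    finally show ?thesis .
  qed
  also have "\<dots> = A \<bullet> (transpose X ** B)"
    by (simp add: mat_inner_eq matrix_matrix_mult_def transpose_def sum_distrib_left mult_ac)
  finally show ?thesis .
qed

lemma matrix_mul_sum_right: "(A::real^'k^'m) ** sum f S = (\<Sum>i\<in>S. A ** (f i :: real^'n^'k))"
  by (induction S rule: infinite_finite_induct) (auto simp: matrix_add_ldistrib)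

lemma matrix_mul_scaleR_right: "(A::real^'k^'m) ** (c *\<^sub>R (B::real^'n^'k)) = c *\<^sub>R (A ** B)"
  by (simp add: vec_eq_iff matrix_matrix_mult_def sum_distrib_left mult_ac)

lemma matrix_mul_diff_right: "(A::real^'k^'m) ** ((B::real^'n^'k) - C) = A ** B - A ** C"
  by (simp add: vec_eq_iff matrix_matrix_mult_def sum_subtractf algebra_simps)

lemma mean_proj:
  fixes P :: "real^'r^'m" and Di :: "nat \<Rightarrow> real^'n^'m"
  shows "(1 / real N) *\<^sub>R (\<Sum>i<N. Di i - P ** transpose P ** Di i)
     = (1 / real N) *\<^sub>R (\<Sum>i<N. Di i) - P ** transpose P ** ((1 / real N) *\<^sub>R (\<Sum>i<N. Di i))"
  by (simp add: matrix_mul_scaleR_right matrix_mul_sum_right sum_subtractf scaleR_diff_right)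

lemma proj_facts:
  fixes P :: "real^'r^'m"
  assumes "transpose P ** P = mat 1"
  shows "transpose (P ** transpose P) = P ** transpose P"
    and "(P ** transpose P) ** (P ** transpose P) = P ** transpose P"
proof -
  show "transpose (P ** transpose P) = P ** transpose P"
    by (simp add: matrix_transpose_mul)
  have "(P ** transpose P) ** (P ** transpose P) = P ** (transpose P ** P) ** transpose P"
    by (simp add: matrix_mul_assoc)
  then show "(P ** transpose P) ** (P ** transpose P) = P ** transpose P"
    using assms by simp
qed

lemma proj_pythag:
  fixes P :: "real^'r^'m" and A :: "real^'n^'m"
  assumes "transpose P ** P = mat 1"
  shows "(norm (A - P ** transpose P ** A))^2 = (norm A)^2 - (norm (P ** transpose P ** A))^2"
    and "(norm (P ** transpose P ** A))^2 = (P ** transpose P ** A) \<bullet> A"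
proof -
  let ?Pi = "P ** transpose P"
  have sq: "(?Pi ** A) \<bullet> (?Pi ** A) = (?Pi ** A) \<bullet> A"
  proof -
    have "(?Pi ** A) \<bullet> (?Pi ** A) = A \<bullet> (transpose ?Pi ** (?Pi ** A))" by (rule mat_adj)
    also have "\<dots> = A \<bullet> (?Pi ** A)" using proj_facts[OF assms] by (simp add: matrix_mul_assoc)
    finally show ?thesis by (simp add: inner_commute)
  qed
  show "(norm (?Pi ** A))^2 = (?Pi ** A) \<bullet> A" using sq by (simp add: power2_norm_eq_inner)
  have "(norm (A - ?Pi ** A))^2 = A \<bullet> A - 2 * ((?Pi ** A) \<bullet> A) + (?Pi ** A) \<bullet> (?Pi ** A)"
    by (simp add: power2_norm_eq_inner inner_diff_left inner_diff_right inner_commute)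
  then show "(norm (A - ?Pi ** A))^2 = (norm A)^2 - (norm (?Pi ** A))^2"
    using sq by (simp add: power2_norm_eq_inner)
qed

lemma proj_le:
  fixes P :: "real^'r^'m" and A :: "real^'n^'m"
  assumes "transpose P ** P = mat 1"
  shows "norm (A - P ** transpose P ** A) \<le> norm A"
  using proj_pythag(1)[OF assms, of A] by (simp add: power2_le_imp_le)

lemma col_pos_less: "col_pos (j::'r::{finite,linorder}) < CARD('r)"
proof -
  have "{k. k < j} \<subset> (UNIV::'r set)" by auto
  then show ?thesis unfolding col_pos_def by (simp add: psubset_card_mono)
qed

lemma col_pos_mono: "(j::'r::{finite,linorder}) < j' \<Longrightarrow> col_pos j < col_pos j'"
proof -
  assume "j < j'"
  then have "{k. k < j} \<subset> {k. k < j'}" by auto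
  then show ?thesis unfolding col_pos_def by (simp add: psubset_card_mono)
qed

lemma col_pos_inj: "inj (col_pos :: 'r::{finite,linorder} \<Rightarrow> nat)"
  by (metis col_pos_mono injI linorder_neqE less_irrefl)

lemma col_pos_bij: "bij_betw (col_pos :: 'r::{finite,linorder} \<Rightarrow> nat) UNIV {..<CARD('r)}"
proof -
  have "col_pos ` (UNIV::'r set) \<subseteq> {..<CARD('r)}" using col_pos_less by auto
  moreover have "card (col_pos ` (UNIV::'r set)) = card {..<CARD('r)}"
    using card_image[OF col_pos_inj] by simp
  ultimately have "col_pos ` (UNIV::'r set) = {..<CARD('r)}"
    by (simp add: card_subset_eq)
  then show ?thesis using col_pos_inj by (simp add: bij_betw_def)
qed

lemma sum_col_pos: "(\<Sum>j\<in>(UNIV::'r::{finite,linorder} set). f (col_pos j)) = (\<Sum>k<CARD('r). f k)"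
  using sum.reindex_bij_betw[OF col_pos_bij, of f] by simp

lemma svd_entry:
  assumes "thin_svd (A::real^'n^'m) s u v"
  shows "A$a$b = (\<Sum>l<CARD('n). s l * u l $ a * v l $ b)"
  using assms unfolding thin_svd_def by (simp add: outer_def mult.assoc)

lemma outer_inner: "outer (u::real^'m) (v::real^'n) \<bullet> outer u' v' = (u \<bullet> u') * (v \<bullet> v')"
  by (simp add: mat_inner_eq outer_def inner_vec_def sum_product mult_ac)

lemma svd_norm:
  assumes sv: "thin_svd (A::real^'n^'m) s u v"
  shows "(norm A)^2 = (\<Sum>k<CARD('n). (s k)^2)"
proof -
  have on: "\<And>k l. k < CARD('n) \<Longrightarrow> l < CARD('n) \<Longrightarrow> u k \<bullet> u l = (if k = l then 1 else 0) \<and> v k \<bullet> v l = (if k = l then 1 else 0)"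
    using sv unfolding thin_svd_def by blast
  have A: "A = (\<Sum>k<CARD('n). s k *\<^sub>R outer (u k) (v k))" using sv unfolding thin_svd_def by blast
  have "(norm A)^2 = A \<bullet> A" by (simp add: power2_norm_eq_inner)
  also have "\<dots> = (\<Sum>k<CARD('n). \<Sum>l<CARD('n). s k * s l * (u k \<bullet> u l) * (v k \<bullet> v l))"
    unfolding A
    by (simp add: inner_sum_left inner_sum_right outer_inner sum_distrib_left mult_ac inner_commute)
  also have "\<dots> = (\<Sum>k<CARD('n). \<Sum>l<CARD('n). if l = k then s k * s k else 0)"
    apply (rule sum.cong[OF refl], rule sum.cong[OF refl])
    subgoal for k l using on[of k l] by (auto simp: inner_commute)
    done
  also have "\<dots> = (\<Sum>k<CARD('n). (s k)^2)"
    by (simp add: power2_eq_square)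
  finally show ?thesis .
qed

lemma dec_mono:
  fixes s :: "nat \<Rightarrow> real"
  assumes "\<forall>k. Suc k < n \<longrightarrow> s (Suc k) \<le> s k"
  shows "i \<le> j \<Longrightarrow> j < n \<Longrightarrow> s j \<le> s i"
proof (induction j)
  case 0 then show ?case by simp
next
  case (Suc j)
  show ?case
  proof (cases "i = Suc j")
    case True then show ?thesis by simp
  next
    case False
    then have "i \<le> j" using Suc.prems by simp
    then have "s j \<le> s i" using Suc by simp
    moreover have "s (Suc j) \<le> s j" using assms Suc.prems by blast
    ultimately show ?thesis by simp
  qed
qed

lemma head_avg:
  fixes s :: "nat \<Rightarrow> real"
  assumes nn: "\<forall>k<n. 0 \<le> s k" and dec: "\<forall>k. Suc k < n \<longrightarrow> s (Suc k) \<le> s k"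
    and r: "1 \<le> r" "r \<le> n"
  shows "real r * (\<Sum>k<n. (s k)^2) \<le> real n * (\<Sum>k<r. (s k)^2)"
proof -
  define m where "m = (s (r - 1))^2"
  have H: "real r * m \<le> (\<Sum>k<r. (s k)^2)"
  proof -
    have "\<And>k. k \<in> {..<r} \<Longrightarrow> m \<le> (s k)^2"
      unfolding m_def using r nn by (auto intro!: power_mono dec_mono[OF dec])
    then show ?thesis using sum_bounded_below[of "{..<r}" m "\<lambda>k. (s k)^2"] by simp
  qed
  have T: "(\<Sum>k\<in>{r..<n}. (s k)^2) \<le> real (n - r) * m"
  proof -
    have "\<And>k. k \<in> {r..<n} \<Longrightarrow> (s k)^2 \<le> m"
      unfolding m_def using r nn by (auto intro!: power_mono dec_mono[OF dec])
    then show ?thesis using sum_bounded_above[of "{r..<n}" "\<lambda>k. (s k)^2" m] by simp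
  qed
  have split: "(\<Sum>k<n. (s k)^2) = (\<Sum>k<r. (s k)^2) + (\<Sum>k\<in>{r..<n}. (s k)^2)"
    using r by (metis lessThan_atLeast0 sum.atLeastLessThan_concat zero_le)
  have m0: "0 \<le> m" unfolding m_def by simp
  have "real r * (\<Sum>k\<in>{r..<n}. (s k)^2) \<le> real r * (real (n - r) * m)"
    using T by (simp add: mult_left_mono)
  also have "\<dots> = real (n - r) * (real r * m)" by simp
  also have "\<dots> \<le> real (n - r) * (\<Sum>k<r. (s k)^2)" using H by (simp add: mult_left_mono)
  finally have "real r * (\<Sum>k\<in>{r..<n}. (s k)^2) \<le> real (n - r) * (\<Sum>k<r. (s k)^2)" .
  then show ?thesis using r by (simp add: split algebra_simps of_nat_diff)
qed

lemma svd_proj: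
  fixes A :: "real^'n^'m" and P :: "((real, 'r::{finite,linorder}) vec, 'm) vec"
  assumes rn: "CARD('r) \<le> CARD('n)" and top: "top_r_left_sv A P"
  shows "transpose P ** P = mat 1"
    and "(norm (A - P ** transpose P ** A))^2 \<le> (1 - real CARD('r) / real CARD('n)) * (norm A)^2"
proof -
  obtain s u v where sv: "thin_svd A s u v" and col: "\<forall>j. column j P = u (col_pos j)"
    using top unfolding top_r_left_sv_def by blast
  have on: "\<And>k l. k < CARD('n) \<Longrightarrow> l < CARD('n) \<Longrightarrow> u k \<bullet> u l = (if k = l then 1 else 0) \<and> v k \<bullet> v l = (if k = l then 1 else 0)"
    using sv unfolding thin_svd_def by blast
  have Pe: "\<And>a j. P$a$j = u (col_pos j) $ a"
    using col by (metis column_def vec_lambda_beta)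
  have cpn: "\<And>j::'r. col_pos j < CARD('n)" using col_pos_less rn less_le_trans by blast
  show PP: "transpose P ** P = mat 1"
  proof -
    have "\<And>j j'::'r. (transpose P ** P)$j$j' = u (col_pos j) \<bullet> u (col_pos j')"
      by (simp add: matrix_matrix_mult_def transpose_def Pe inner_vec_def)
    then show ?thesis using on cpn col_pos_inj
      by (auto simp: vec_eq_iff mat_def dest: injD)
  qed
  define B where "B = transpose P ** A"
  have Be: "B$j$b = s (col_pos j) * v (col_pos j) $ b" for j b
  proof -
    let ?k = "col_pos j"
    have "B$j$b = (\<Sum>a\<in>UNIV. u ?k $ a * (\<Sum>l<CARD('n). s l * u l $ a * v l $ b))"
      by (simp add: B_def matrix_matrix_mult_def transpose_def Pe svd_entry[OF sv])
    also have "\<dots> = (\<Sum>l<CARD('n). s l * (u ?k \<bullet> u l) * v l $ b)"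
      by (simp add: inner_vec_def sum_distrib_left sum_distrib_right mult_ac sum.swap[of _ UNIV])
    also have "\<dots> = (\<Sum>l<CARD('n). if l = ?k then s ?k * v ?k $ b else 0)"
      by (rule sum.cong[OF refl]) (use on cpn in auto)
    also have "\<dots> = s ?k * v ?k $ b" using cpn by simp
    finally show ?thesis .
  qed
  have nB: "(norm B)^2 = (\<Sum>k<CARD('r). (s k)^2)"
  proof -
    have "(norm B)^2 = (\<Sum>j\<in>UNIV. \<Sum>b\<in>UNIV. B$j$b * B$j$b)"
      by (simp add: power2_norm_eq_inner mat_inner_eq)
    also have "\<dots> = (\<Sum>j\<in>(UNIV::'r set). (s (col_pos j))^2 * (v (col_pos j) \<bullet> v (col_pos j)))"
      apply (rule sum.cong[OF refl])
      by (simp add: Be inner_vec_def sum_distrib_left power2_eq_square mult_ac)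
    also have "\<dots> = (\<Sum>j\<in>(UNIV::'r set). (s (col_pos j))^2)"
      using on cpn by simp
    also have "\<dots> = (\<Sum>k<CARD('r). (s k)^2)" by (rule sum_col_pos)
    finally show ?thesis .
  qed
  have "(norm (P ** transpose P ** A))^2 = (P ** transpose P ** A) \<bullet> A"
    by (rule proj_pythag(2)[OF PP])
  also have "\<dots> = (P ** B) \<bullet> A" by (simp add: B_def matrix_mul_assoc)
  also have "\<dots> = B \<bullet> B" by (simp add: mat_adj B_def)
  also have "\<dots> = (\<Sum>k<CARD('r). (s k)^2)" using nB by (simp add: power2_norm_eq_inner)
  finally have nPA: "(norm (P ** transpose P ** A))^2 = (\<Sum>k<CARD('r). (s k)^2)" .
  have ha: "real CARD('r) * (\<Sum>k<CARD('n). (s k)^2) \<le> real CARD('n) * (\<Sum>k<CARD('r). (s k)^2)"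
    apply (rule head_avg) using sv rn unfolding thin_svd_def by auto
  have nA: "(norm A)^2 = (\<Sum>k<CARD('n). (s k)^2)" by (rule svd_norm[OF sv])
  have "(norm (A - P ** transpose P ** A))^2 = (norm A)^2 - (\<Sum>k<CARD('r). (s k)^2)"
    using proj_pythag(1)[OF PP, of A] nPA by simp
  also have "\<dots> \<le> (1 - real CARD('r) / real CARD('n)) * (norm A)^2"
  proof -
    have "real CARD('r) / real CARD('n) * (norm A)^2 \<le> (\<Sum>k<CARD('r). (s k)^2)"
      using ha nA by (simp add: divide_simps mult.commute)
    then show ?thesis by (simp add: algebra_simps)
  qed
  finally show "(norm (A - P ** transpose P ** A))^2 \<le> (1 - real CARD('r) / real CARD('n)) * (norm A)^2" .
qed

lemma cont_mult: "continuous_on UNIV (\<lambda>x. fst x ** (snd x :: real^'n^'k) :: real^'n^'m)"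
  unfolding matrix_matrix_mult_def
  by (intro continuous_intros continuous_on_vec_lambda continuous_on_sum continuous_on_mult) 

lemma bm_mult[measurable (raw)]:
  "f \<in> borel_measurable M \<Longrightarrow> g \<in> borel_measurable M \<Longrightarrow> (\<lambda>x. (f x :: real^'k^'m) ** (g x :: real^'n^'k)) \<in> borel_measurable M"
  by (rule borel_measurable_continuous_Pair[OF _ _ cont_mult])

lemma cont_transpose: "continuous_on UNIV (\<lambda>x::real^'n^'m. transpose x)"
  unfolding transpose_def
  by (intro continuous_intros continuous_on_vec_lambda)

lemma bm_transpose[measurable (raw)]:
  "f \<in> borel_measurable M \<Longrightarrow> (\<lambda>x. transpose (f x :: real^'n^'m)) \<in> borel_measurable M"
  using measurable_compose[OF _ borel_measurable_continuous_onI[OF cont_transpose]] by blast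

context
  fixes N :: nat and gF :: "real^'n^'m \<Rightarrow> 'b \<Rightarrow> real^'n^'m"
    and qrf :: "((real, 'r::{finite,linorder}) vec, 'm::finite) vec \<Rightarrow> ((real, 'r) vec, 'm) vec"
    and svdf :: "real^'n^'m \<Rightarrow> ((real, 'r) vec, 'm) vec"
    and \<tau> :: nat and \<eta> \<mu> :: real and X0 :: "real^'n^'m" and Q0 :: "((real, 'r) vec, 'n) vec"
begin

definition "XX w t = fst (psgd N gF qrf svdf \<tau> \<eta> \<mu> X0 Q0 w t)"
definition "EE w t = fst (snd (psgd N gF qrf svdf \<tau> \<eta> \<mu> X0 Q0 w t))"
definition "MM w t = fst (snd (snd (psgd N gF qrf svdf \<tau> \<eta> \<mu> X0 Q0 w t)))"
definition "QQ w t = snd (snd (snd (psgd N gF qrf svdf \<tau> \<eta> \<mu> X0 Q0 w t)))"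
definition "Di w t i = gF (XX w t) (w (t, i)) + EE w t i"
definition "Dl w t = (1 / real N) *\<^sub>R (\<Sum>i<N. Di w t i)"
definition "PP w t = (if t mod \<tau> = 0 then svdf (Dl w t)
               else qrf ((1 / real N) *\<^sub>R (\<Sum>i<N. Di w t i ** QQ w t)))"
definition "Qn w t = (1 / real N) *\<^sub>R (\<Sum>i<N. transpose (Di w t i) ** PP w t)"

lemma psgd_Suc_eq:
  "psgd N gF qrf svdf \<tau> \<eta> \<mu> X0 Q0 w (Suc t) =
    (XX w t - \<eta> *\<^sub>R (\<mu> *\<^sub>R MM w t + PP w t ** transpose (Qn w t)),
     (\<lambda>i. Di w t i - PP w t ** transpose (PP w t) ** Di w t i),
     \<mu> *\<^sub>R MM w t + PP w t ** transpose (Qn w t), Qn w t)"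
  by (simp add: XX_def EE_def MM_def QQ_def Di_def Dl_def PP_def Qn_def split_beta Let_def)

lemma XX_Suc: "XX w (Suc t) = XX w t - \<eta> *\<^sub>R (\<mu> *\<^sub>R MM w t + PP w t ** transpose (Qn w t))"
  by (simp only: XX_def[of w "Suc t"] psgd_Suc_eq fst_conv snd_conv)
lemma EE_Suc: "EE w (Suc t) i = Di w t i - PP w t ** transpose (PP w t) ** Di w t i"
  by (simp only: EE_def[of w "Suc t"] psgd_Suc_eq fst_conv snd_conv)
lemma MM_Suc: "MM w (Suc t) = \<mu> *\<^sub>R MM w t + PP w t ** transpose (Qn w t)"
  by (simp only: MM_def[of w "Suc t"] psgd_Suc_eq fst_conv snd_conv)
lemma QQ_Suc: "QQ w (Suc t) = Qn w t"
  by (simp only: QQ_def[of w "Suc t"] psgd_Suc_eq fst_conv snd_conv)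
lemma XX_0: "XX w 0 = X0" and EE_0: "EE w 0 i = 0" and MM_0: "MM w 0 = 0" and QQ_0: "QQ w 0 = Q0"
  by (simp_all add: XX_def EE_def MM_def QQ_def)

lemma local_dep:
  assumes "\<forall>s<t. \<forall>i<N. w (s, i) = w' (s, i)"
  shows "XX w t = XX w' t \<and> MM w t = MM w' t \<and> QQ w t = QQ w' t \<and> (\<forall>i<N. EE w t i = EE w' t i)"
  using assms
proof (induction t)
  case 0 then show ?case by (simp add: XX_0 EE_0 MM_0 QQ_0)
next
  case (Suc t)
  then have IH: "XX w t = XX w' t \<and> MM w t = MM w' t \<and> QQ w t = QQ w' t \<and> (\<forall>i<N. EE w t i = EE w' t i)"
    by simp
  have wt: "\<forall>i<N. w (t, i) = w' (t, i)" using Suc.prems by simp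
  have Di: "\<forall>i<N. Di w t i = Di w' t i" using IH wt by (simp add: Di_def)
  have Dl: "Dl w t = Dl w' t" using Di by (simp add: Dl_def)
  have P: "PP w t = PP w' t" using Di Dl IH by (simp add: PP_def)
  have Q: "Qn w t = Qn w' t" using Di P by (simp add: Qn_def)
  show ?case using IH Di P Q by (simp add: XX_Suc MM_Suc QQ_Suc EE_Suc)
qed


lemma ebar_step:
  assumes qr: "\<forall>A. is_econ_QR A (qrf A)" and sv: "\<forall>A. top_r_left_sv A (svdf A)"
    and rn: "CARD('r) \<le> CARD('n)"
  shows "norm ((1 / real N) *\<^sub>R (\<Sum>i<N. EE w (Suc t) i)) \<le>
    (if t mod \<tau> = 0 then sqrt (1 - real CARD('r) / real CARD('n)) else 1) *
      (norm ((1 / real N) *\<^sub>R (\<Sum>i<N. gF (XX w t) (w (t, i)))) + norm ((1 / real N) *\<^sub>R (\<Sum>i<N. EE w t i)))"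
proof -
  let ?P = "PP w t"
  have eq: "(1 / real N) *\<^sub>R (\<Sum>i<N. EE w (Suc t) i) = Dl w t - ?P ** transpose ?P ** Dl w t"
    unfolding EE_Suc Dl_def by (rule mean_proj)
  have Dl: "Dl w t = (1 / real N) *\<^sub>R (\<Sum>i<N. gF (XX w t) (w (t, i))) + (1 / real N) *\<^sub>R (\<Sum>i<N. EE w t i)"
    by (simp add: Dl_def Di_def sum.distrib scaleR_add_right)
  have tri: "norm (Dl w t) \<le> norm ((1 / real N) *\<^sub>R (\<Sum>i<N. gF (XX w t) (w (t, i)))) + norm ((1 / real N) *\<^sub>R (\<Sum>i<N. EE w t i))"
    unfolding Dl by (rule norm_triangle_ineq)
  show ?thesis
  proof (cases "t mod \<tau> = 0")
    case True
    then have P: "?P = svdf (Dl w t)" by (simp add: PP_def)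
    have "(norm (Dl w t - ?P ** transpose ?P ** Dl w t))^2 \<le> (1 - real CARD('r) / real CARD('n)) * (norm (Dl w t))^2"
      unfolding P by (rule svd_proj(2)) (use rn sv in auto)
    then have "sqrt ((norm (Dl w t - ?P ** transpose ?P ** Dl w t))^2) \<le> sqrt ((1 - real CARD('r) / real CARD('n)) * (norm (Dl w t))^2)"
      by (rule real_sqrt_le_mono)
    then have "norm (Dl w t - ?P ** transpose ?P ** Dl w t) \<le> sqrt (1 - real CARD('r) / real CARD('n)) * norm (Dl w t)"
      by (simp add: real_sqrt_mult)
    also have "\<dots> \<le> sqrt (1 - real CARD('r) / real CARD('n)) * (norm ((1 / real N) *\<^sub>R (\<Sum>i<N. gF (XX w t) (w (t, i)))) + norm ((1 / real N) *\<^sub>R (\<Sum>i<N. EE w t i)))"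
      by (rule mult_left_mono[OF tri]) (use rn in \<open>simp add: field_simps\<close>)
    finally show ?thesis using True eq by simp
  next
    case False
    then have P: "?P = qrf ((1 / real N) *\<^sub>R (\<Sum>i<N. Di w t i ** QQ w t))" by (simp add: PP_def)
    have "transpose ?P ** ?P = mat 1" unfolding P using qr unfolding is_econ_QR_def by blast
    then have "norm (Dl w t - ?P ** transpose ?P ** Dl w t) \<le> norm (Dl w t)" by (rule proj_le)
    then show ?thesis using False eq tri by simp
  qed
qed

lemma psgd_measurable:
  fixes D :: "nat \<Rightarrow> 'b measure"
  assumes gm: "\<forall>i<N. (\<lambda>(X, \<xi>). gF X \<xi>) \<in> borel_measurable (borel \<Otimes>\<^sub>M D i)"
    and qm: "qrf \<in> borel_measurable borel" and sm: "svdf \<in> borel_measurable borel"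
  shows "(\<lambda>w. XX w t) \<in> borel_measurable (PiM (UNIV \<times> {..<N}) (\<lambda>(t, i). D i)) \<and>
         (\<lambda>w. MM w t) \<in> borel_measurable (PiM (UNIV \<times> {..<N}) (\<lambda>(t, i). D i)) \<and>
         (\<lambda>w. QQ w t) \<in> borel_measurable (PiM (UNIV \<times> {..<N}) (\<lambda>(t, i). D i)) \<and>
         (\<forall>i<N. (\<lambda>w. EE w t i) \<in> borel_measurable (PiM (UNIV \<times> {..<N}) (\<lambda>(t, i). D i)))"
proof (induction t)
  case 0 then show ?case by (simp add: XX_0 EE_0 MM_0 QQ_0)
next
  case (Suc t)
  let ?M = "PiM (UNIV \<times> {..<N}) (\<lambda>(t, i). D i)"
  have X: "(\<lambda>w. XX w t) \<in> borel_measurable ?M" and Mm: "(\<lambda>w. MM w t) \<in> borel_measurable ?M"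
    and Q: "(\<lambda>w. QQ w t) \<in> borel_measurable ?M" and E: "\<And>i. i < N \<Longrightarrow> (\<lambda>w. EE w t i) \<in> borel_measurable ?M"
    using Suc by auto
  have comp: "(\<lambda>w. w (t, i)) \<in> measurable ?M (D i)" if "i < N" for i
    using measurable_component_singleton[of "(t, i)" "UNIV \<times> {..<N}" "\<lambda>(t, i). D i"] that by simp
  have G: "(\<lambda>w. gF (XX w t) (w (t, i))) \<in> borel_measurable ?M" if "i < N" for i
  proof -
    have "(\<lambda>w. (XX w t, w (t, i))) \<in> measurable ?M (borel \<Otimes>\<^sub>M D i)"
      using X comp[OF that] by (rule measurable_Pair)
    from measurable_comp[OF this gm[rule_format, OF that]] show ?thesis by (simp add: comp_def)
  qed
  have Di: "(\<lambda>w. Di w t i) \<in> borel_measurable ?M" if "i < N" for i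
    unfolding Di_def using G[OF that] E[OF that] by measurable
  have Dl: "(\<lambda>w. Dl w t) \<in> borel_measurable ?M"
    unfolding Dl_def using Di by (intro borel_measurable_scaleR borel_measurable_const borel_measurable_sum) auto
  have P: "(\<lambda>w. PP w t) \<in> borel_measurable ?M"
  proof (cases "t mod \<tau> = 0")
    case True
    then show ?thesis unfolding PP_def using measurable_comp[OF Dl sm] by (simp add: comp_def)
  next
    case False
    have "(\<lambda>w. (1 / real N) *\<^sub>R (\<Sum>i<N. Di w t i ** QQ w t)) \<in> borel_measurable ?M"
      using Di Q by (intro borel_measurable_scaleR borel_measurable_const borel_measurable_sum bm_mult) auto
    from measurable_comp[OF this qm] False show ?thesis unfolding PP_def by (simp add: comp_def)
  qed
  have Qn: "(\<lambda>w. Qn w t) \<in> borel_measurable ?M"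
    unfolding Qn_def using Di P by (intro borel_measurable_scaleR borel_measurable_const borel_measurable_sum bm_mult bm_transpose) auto
  show ?case
    unfolding XX_Suc MM_Suc QQ_Suc EE_Suc
    using X Mm P Qn Di by (auto intro!: borel_measurable_scaleR borel_measurable_const bm_mult bm_transpose borel_measurable_add borel_measurable_diff)
qed


lemma gbar_measurable:
  fixes D :: "nat \<Rightarrow> 'b measure"
  assumes gm: "\<forall>i<N. (\<lambda>(X, \<xi>). gF X \<xi>) \<in> borel_measurable (borel \<Otimes>\<^sub>M D i)"
    and qm: "qrf \<in> borel_measurable borel" and sm: "svdf \<in> borel_measurable borel"
  shows "(\<lambda>w. (1 / real N) *\<^sub>R (\<Sum>i<N. gF (XX w t) (w (t, i)))) \<in> borel_measurable (PiM (UNIV \<times> {..<N}) (\<lambda>(t, i). D i))"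
proof -
  let ?M = "PiM (UNIV \<times> {..<N}) (\<lambda>(t, i). D i)"
  have X: "(\<lambda>w. XX w t) \<in> borel_measurable ?M" using psgd_measurable[OF gm qm sm] by blast
  have comp: "(\<lambda>w. w (t, i)) \<in> measurable ?M (D i)" if "i < N" for i
    using measurable_component_singleton[of "(t, i)" "UNIV \<times> {..<N}" "\<lambda>(t, i). D i"] that by simp
  have G: "(\<lambda>w. gF (XX w t) (w (t, i))) \<in> borel_measurable ?M" if "i < N" for i
  proof -
    have "(\<lambda>w. (XX w t, w (t, i))) \<in> measurable ?M (borel \<Otimes>\<^sub>M D i)"
      using X comp[OF that] by (rule measurable_Pair)
    from measurable_comp[OF this gm[rule_format, OF that]] show ?thesis by (simp add: comp_def)
  qed
  show ?thesis using G by (intro borel_measurable_scaleR borel_measurable_const borel_measurable_sum) auto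
qed

end

lemma distr_merge_PiM_inf:
  fixes M :: "'i \<Rightarrow> 'a measure"
  assumes M: "\<And>i. i \<in> I \<union> J \<Longrightarrow> prob_space (M i)" and IJ: "I \<inter> J = {}"
  shows "distr (PiM I M \<Otimes>\<^sub>M PiM J M) (PiM (I \<union> J) M) (merge I J) = PiM (I \<union> J) M"
proof (rule measure_eqI_PiM_infinite[symmetric, OF refl])
  interpret PI: prob_space "PiM I M" using M by (intro prob_space_PiM) auto
  interpret PJ: prob_space "PiM J M" using M by (intro prob_space_PiM) auto
  interpret PU: prob_space "PiM (I \<union> J) M" using M by (intro prob_space_PiM) auto
  interpret PP: pair_prob_space "PiM I M" "PiM J M" ..
  show "finite_measure (PiM (I \<union> J) M)" by unfold_locales
  fix K A assume K: "finite K" "K \<subseteq> I \<union> J" and A: "\<And>i. i \<in> K \<Longrightarrow> A i \<in> sets (M i)"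
  let ?X = "prod_emb (I \<union> J) M K (Pi\<^sub>E K A)"
  have "PiM (I \<union> J) M ?X = (\<Prod>i\<in>K. M i (A i))"
    using M K A by (intro emeasure_PiM_emb) auto
  also have "\<dots> = (\<Prod>i\<in>K \<inter> I. M i (A i)) * (\<Prod>i\<in>K \<inter> J. M i (A i))"
  proof -
    have "K = (K \<inter> I) \<union> (K \<inter> J)" using K by auto
    then show ?thesis using K IJ by (metis prod.union_disjoint finite_Int Int_assoc Int_commute Int_empty_right Int_left_commute)
  qed
  also have "(\<Prod>i\<in>K \<inter> I. M i (A i)) = PiM I M (prod_emb I M (K \<inter> I) (Pi\<^sub>E (K \<inter> I) A))"
    using M K A by (intro emeasure_PiM_emb[symmetric]) auto
  also have "(\<Prod>i\<in>K \<inter> J. M i (A i)) = PiM J M (prod_emb J M (K \<inter> J) (Pi\<^sub>E (K \<inter> J) A))"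
    using M K A by (intro emeasure_PiM_emb[symmetric]) auto
  also have "PiM I M (prod_emb I M (K \<inter> I) (Pi\<^sub>E (K \<inter> I) A)) * PiM J M (prod_emb J M (K \<inter> J) (Pi\<^sub>E (K \<inter> J) A))
     = (PiM I M \<Otimes>\<^sub>M PiM J M) (prod_emb I M (K \<inter> I) (Pi\<^sub>E (K \<inter> I) A) \<times> prod_emb J M (K \<inter> J) (Pi\<^sub>E (K \<inter> J) A))"
    using K A by (intro PJ.emeasure_pair_measure_Times[symmetric] sets_PiM_I) auto
  also have "prod_emb I M (K \<inter> I) (Pi\<^sub>E (K \<inter> I) A) \<times> prod_emb J M (K \<inter> J) (Pi\<^sub>E (K \<inter> J) A)
     = merge I J -` ?X \<inter> space (PiM I M \<Otimes>\<^sub>M PiM J M)"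
    using IJ K unfolding set_eq_iff
    by (auto simp: prod_emb_def space_pair_measure space_PiM PiE_iff merge_def extensional_def split: if_splits)
  finally show "PiM (I \<union> J) M ?X = distr (PiM I M \<Otimes>\<^sub>M PiM J M) (PiM (I \<union> J) M) (merge I J) ?X"
    using K A by (subst emeasure_distr) (auto intro!: sets_PiM_I)
qed simp


lemma slice_bound:
  fixes D :: "nat \<Rightarrow> 'b measure" and Xf :: "(nat \<times> nat \<Rightarrow> 'b) \<Rightarrow> 'x"
    and h :: "'x \<Rightarrow> (nat \<Rightarrow> 'b) \<Rightarrow> ennreal"
  assumes prob: "\<forall>i<N. prob_space (D i)"
    and Xloc: "\<And>w w'. (\<forall>s<t. \<forall>i<N. w (s, i) = w' (s, i)) \<Longrightarrow> Xf w = Xf w'"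
    and hm: "\<And>X. (\<lambda>\<xi>. h X \<xi>) \<in> borel_measurable (PiM {..<N} D)"
    and hloc: "\<And>X \<xi> \<xi>'. (\<forall>i<N. \<xi> i = \<xi>' i) \<Longrightarrow> h X \<xi> = h X \<xi>'"
    and fm: "(\<lambda>w. h (Xf w) (\<lambda>i. w (t, i))) \<in> borel_measurable (PiM (UNIV \<times> {..<N}) (\<lambda>(t, i). D i))"
    and bound: "\<And>X. (\<integral>\<^sup>+\<xi>. h X \<xi> \<partial>PiM {..<N} D) \<le> B"
  shows "(\<integral>\<^sup>+w. h (Xf w) (\<lambda>i. w (t, i)) \<partial>PiM (UNIV \<times> {..<N}) (\<lambda>(t, i). D i)) \<le> B"
proof -
  define Mf where "Mf = (\<lambda>(t::nat, i::nat). D i)"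
  define I1 where "I1 = {t} \<times> {..<N}"
  define J1 where "J1 = (UNIV \<times> {..<N}) - I1"
  define f where "f = (\<lambda>w. h (Xf w) (\<lambda>i. w (t, i)))"
  have IJ: "I1 \<inter> J1 = {}" and U: "I1 \<union> J1 = UNIV \<times> {..<N}" by (auto simp: I1_def J1_def)
  have pMf: "\<And>k. k \<in> I1 \<union> J1 \<Longrightarrow> prob_space (Mf k)" using prob U by (auto simp: Mf_def)
  interpret PI: prob_space "PiM I1 Mf" using pMf by (intro prob_space_PiM) auto
  interpret PJ: prob_space "PiM J1 Mf" using pMf by (intro prob_space_PiM) auto
  interpret PP: pair_sigma_finite "PiM I1 Mf" "PiM J1 Mf" ..
  have fm': "f \<in> borel_measurable (PiM (I1 \<union> J1) Mf)" using fm unfolding U f_def Mf_def .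
  have "(\<integral>\<^sup>+w. f w \<partial>PiM (I1 \<union> J1) Mf) = (\<integral>\<^sup>+w. f w \<partial>distr (PiM I1 Mf \<Otimes>\<^sub>M PiM J1 Mf) (PiM (I1 \<union> J1) Mf) (merge I1 J1))"
    using distr_merge_PiM_inf[OF pMf IJ] by simp
  also have "\<dots> = (\<integral>\<^sup>+z. f (merge I1 J1 z) \<partial>(PiM I1 Mf \<Otimes>\<^sub>M PiM J1 Mf))"
    by (rule nn_integral_distr) (use fm' in simp_all)
  also have "\<dots> = (\<integral>\<^sup>+y. (\<integral>\<^sup>+x. f (merge I1 J1 (x, y)) \<partial>PiM I1 Mf) \<partial>PiM J1 Mf)"
  proof (rule PP.nn_integral_snd[symmetric])
    show "(\<lambda>z. f (merge I1 J1 z)) \<in> borel_measurable (PiM I1 Mf \<Otimes>\<^sub>M PiM J1 Mf)"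
      using measurable_comp[OF measurable_merge fm'] by (simp add: comp_def)
  qed
  also have "\<dots> \<le> (\<integral>\<^sup>+y. B \<partial>PiM J1 Mf)"
  proof (rule nn_integral_mono)
    fix y
    have fx: "f (merge I1 J1 (x, y)) = h (Xf y) (restrict (\<lambda>n. x (t, n)) {..<N})" for x
    proof -
      have "Xf (merge I1 J1 (x, y)) = Xf y"
        by (rule Xloc) (auto simp: merge_def I1_def J1_def)
      moreover have "h (Xf y) (\<lambda>i. merge I1 J1 (x, y) (t, i)) = h (Xf y) (restrict (\<lambda>n. x (t, n)) {..<N})"
        by (rule hloc) (auto simp: merge_def I1_def)
      ultimately show ?thesis by (simp add: f_def)
    qed
    have dist: "distr (PiM I1 Mf) (PiM {..<N} (\<lambda>i. Mf (t, i))) (\<lambda>\<omega>. \<lambda>n\<in>{..<N}. \<omega> (t, n)) = PiM {..<N} (\<lambda>i. Mf (t, i))"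
      by (rule distr_PiM_reindex) (use pMf in \<open>auto simp: I1_def inj_on_def\<close>)
    have Mft: "(\<lambda>i. Mf (t, i)) = D" by (simp add: Mf_def)
    have "(\<integral>\<^sup>+x. f (merge I1 J1 (x, y)) \<partial>PiM I1 Mf) = (\<integral>\<^sup>+x. h (Xf y) (restrict (\<lambda>n. x (t, n)) {..<N}) \<partial>PiM I1 Mf)"
      by (simp only: fx)
    also have "\<dots> = (\<integral>\<^sup>+\<xi>. h (Xf y) \<xi> \<partial>distr (PiM I1 Mf) (PiM {..<N} (\<lambda>i. Mf (t, i))) (\<lambda>\<omega>. \<lambda>n\<in>{..<N}. \<omega> (t, n)))"
    proof (rule nn_integral_distr[symmetric])
      show "(\<lambda>\<omega>. \<lambda>n\<in>{..<N}. \<omega> (t, n)) \<in> measurable (PiM I1 Mf) (PiM {..<N} (\<lambda>i. Mf (t, i)))"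
        by (rule measurable_restrict) (auto simp: I1_def intro!: measurable_component_singleton)
      show "h (Xf y) \<in> borel_measurable (distr (PiM I1 Mf) (PiM {..<N} (\<lambda>i. Mf (t, i))) (\<lambda>\<omega>. \<lambda>n\<in>{..<N}. \<omega> (t, n)))"
        using hm[of "Xf y"] by (simp add: Mft)
    qed
    also have "\<dots> = (\<integral>\<^sup>+\<xi>. h (Xf y) \<xi> \<partial>PiM {..<N} D)" using dist unfolding Mft by simp
    also have "\<dots> \<le> B" by (rule bound)
    finally show "(\<integral>\<^sup>+x. f (merge I1 J1 (x, y)) \<partial>PiM I1 Mf) \<le> B" .
  qed
  also have "\<dots> = B" by (simp add: PJ.emeasure_space_1)
  finally show ?thesis unfolding U f_def Mf_def .
qed

lemma young_sq:
  fixes a g \<rho> :: real assumes "0 < \<rho>"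
  shows "(a + g)^2 \<le> (1 + \<rho>) * a^2 + (1 + 1 / \<rho>) * g^2"
proof -
  have eq: "\<rho> * ((1 + \<rho>) * a^2 + (1 + 1 / \<rho>) * g^2) - \<rho> * (a + g)^2 = (\<rho> * a - g)^2"
    using assms by (simp add: field_simps power2_eq_square)
  have "0 \<le> (\<rho> * a - g)^2" by simp
  then have "\<rho> * (a + g)^2 \<le> \<rho> * ((1 + \<rho>) * a^2 + (1 + 1 / \<rho>) * g^2)"
    using eq by linarith
  then show ?thesis using assms by simp
qed

lemma nn_step:
  fixes a g a' :: "'x \<Rightarrow> real"
  assumes am: "a \<in> borel_measurable M" and gm: "g \<in> borel_measurable M"
    and pw: "\<And>w. w \<in> space M \<Longrightarrow> a' w \<le> c * (a w + g w)"
    and nn: "\<And>w. 0 \<le> a' w"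
    and c: "0 \<le> c" and x: "0 \<le> x" and G: "0 \<le> G" and e: "0 < \<eta>"
    and Ea: "(\<integral>\<^sup>+w. ennreal ((a w)^2) \<partial>M) \<le> ennreal (x^2)"
    and Eg: "(\<integral>\<^sup>+w. ennreal ((g w)^2) \<partial>M) \<le> ennreal (G^2)"
  shows "(\<integral>\<^sup>+w. ennreal ((a' w)^2) \<partial>M) \<le> ennreal ((c * (x + G + 2 * \<eta>))^2)"
proof -
  define p where "p = x + \<eta>"
  define q where "q = G + \<eta>"
  define \<rho> where "\<rho> = q / p"
  have p: "0 < p" and q: "0 < q" using x G e by (auto simp: p_def q_def)
  then have r: "0 < \<rho>" by (simp add: \<rho>_def)
  define A where "A = c^2 * (1 + \<rho>)"
  define B where "B = c^2 * (1 + 1 / \<rho>)"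
  have A: "0 \<le> A" and B: "0 \<le> B" using r by (auto simp: A_def B_def)
  have pt: "(a' w)^2 \<le> A * (a w)^2 + B * (g w)^2" if "w \<in> space M" for w
  proof -
    have "(a' w)^2 \<le> (c * (a w + g w))^2"
      using pw[OF that] nn[of w] by (simp add: power_mono)
    also have "\<dots> = c^2 * (a w + g w)^2" by (simp add: power_mult_distrib)
    also have "\<dots> \<le> c^2 * ((1 + \<rho>) * (a w)^2 + (1 + 1 / \<rho>) * (g w)^2)"
      using young_sq[OF r] by (simp add: mult_left_mono)
    finally show ?thesis by (simp add: A_def B_def algebra_simps)
  qed
  have "(\<integral>\<^sup>+w. ennreal ((a' w)^2) \<partial>M) \<le> (\<integral>\<^sup>+w. ennreal A * ennreal ((a w)^2) + ennreal B * ennreal ((g w)^2) \<partial>M)"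
    using pt A B by (intro nn_integral_mono) (simp add: ennreal_mult[symmetric] ennreal_plus[symmetric] del: ennreal_plus)
  also have "\<dots> = ennreal A * (\<integral>\<^sup>+w. ennreal ((a w)^2) \<partial>M) + ennreal B * (\<integral>\<^sup>+w. ennreal ((g w)^2) \<partial>M)"
    using am gm by (simp add: nn_integral_add nn_integral_cmult)
  also have "\<dots> \<le> ennreal A * ennreal (x^2) + ennreal B * ennreal (G^2)"
    by (intro add_mono mult_left_mono Ea Eg) auto
  also have "\<dots> = ennreal (A * x^2 + B * G^2)"
    using A B by (simp add: ennreal_mult[symmetric] ennreal_plus[symmetric] del: ennreal_plus)
  also have "\<dots> \<le> ennreal ((c * (x + G + 2 * \<eta>))^2)"
  proof (rule ennreal_leI)
    have "x^2 \<le> p^2" "G^2 \<le> q^2" using x G e by (auto simp: p_def q_def intro!: power_mono)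
    then have "A * x^2 + B * G^2 \<le> A * p^2 + B * q^2" using A B by (intro add_mono mult_left_mono) auto
    also have "\<dots> = c^2 * (p + q)^2"
      using p q by (simp add: A_def B_def \<rho>_def field_simps power2_eq_square)
    also have "p + q = x + G + 2 * \<eta>" by (simp add: p_def q_def)
    then have "c^2 * (p + q)^2 = (c * (x + G + 2 * \<eta>))^2" by (simp add: power_mult_distrib)
    finally show "A * x^2 + B * G^2 \<le> (c * (x + G + 2 * \<eta>))^2" .
  qed
  finally show ?thesis .
qed

lemma mod_facts:
  fixes t \<tau> :: nat assumes "1 \<le> \<tau>"
  shows "t mod \<tau> = 0 \<Longrightarrow> Suc t mod \<tau> = 0 \<Longrightarrow> \<tau> = 1"
    and "t mod \<tau> = 0 \<Longrightarrow> Suc t mod \<tau> \<noteq> 0 \<Longrightarrow> Suc t mod \<tau> = 1"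
    and "t mod \<tau> \<noteq> 0 \<Longrightarrow> Suc t mod \<tau> = 0 \<Longrightarrow> Suc (t mod \<tau>) = \<tau>"
    and "t mod \<tau> \<noteq> 0 \<Longrightarrow> Suc t mod \<tau> \<noteq> 0 \<Longrightarrow> Suc t mod \<tau> = Suc (t mod \<tau>)"
    and "t mod \<tau> < \<tau>"
  using assms by (auto simp: mod_Suc split: if_splits)

primrec beta :: "nat \<Rightarrow> real \<Rightarrow> real \<Rightarrow> nat \<Rightarrow> real" where
  "beta \<tau> cc G' 0 = 0"
| "beta \<tau> cc G' (Suc t) = (if t mod \<tau> = 0 then cc else 1) * (beta \<tau> cc G' t + G')"

lemma beta_nonneg: "0 \<le> cc \<Longrightarrow> 0 \<le> G' \<Longrightarrow> 0 \<le> beta \<tau> cc G' t"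
  by (induction t) auto

lemma beta_bound:
  assumes tau: "1 \<le> \<tau>" and cc: "0 \<le> cc" "cc < 1" and G: "0 \<le> G'"
  shows "beta \<tau> cc G' t \<le> real \<tau> * G' / (1 - cc)"
proof -
  define K where "K = real \<tau> * G' / (1 - cc)"
  have K: "K * (1 - cc) = real \<tau> * G'" using cc by (simp add: K_def)
  have Kn: "0 \<le> K" using cc G by (simp add: K_def)
  have inv: "(if t mod \<tau> = 0 then beta \<tau> cc G' t \<le> K
          else beta \<tau> cc G' t + real (\<tau> - t mod \<tau>) * G' \<le> K)" for t
  proof (induction t)
    case 0 then show ?case using Kn by simp
  next
    case (Suc t)
    show ?case
    proof (cases "t mod \<tau> = 0")
      case True
      then have b: "beta \<tau> cc G' (Suc t) = cc * (beta \<tau> cc G' t + G')" by simp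
      have bt: "beta \<tau> cc G' t \<le> K" using Suc True by simp
      have 1: "beta \<tau> cc G' (Suc t) \<le> cc * (K + G')" unfolding b using bt cc by (intro mult_left_mono) auto
      show ?thesis
      proof (cases "Suc t mod \<tau> = 0")
        case True2: True
        then have "\<tau> = 1" using mod_facts(1)[OF tau True] by simp
        moreover have "G' * cc \<le> G'" using cc G by (simp add: mult_left_le)
        ultimately have "cc * (K + G') \<le> K" using K by (simp add: algebra_simps)
        then show ?thesis using True2 1 by simp
      next
        case False2: False
        then have m: "Suc t mod \<tau> = 1" using mod_facts(2)[OF tau True] by simp
        have "cc * (K + G') + real (\<tau> - 1) * G' \<le> K"
        proof -
          have "cc * (K + G') + real (\<tau> - 1) * G' = cc * K + (cc + real \<tau> - 1) * G'"
            using tau by (simp add: of_nat_diff algebra_simps)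
          also have "\<dots> \<le> cc * K + real \<tau> * G'"
            using cc G by (intro add_left_mono mult_right_mono) auto
          also have "\<dots> = K" using K by (simp add: algebra_simps)
          finally show ?thesis .
        qed
        then show ?thesis using False2 m 1 by simp
      qed
    next
      case False
      then have b: "beta \<tau> cc G' (Suc t) = beta \<tau> cc G' t + G'" by simp
      have bt: "beta \<tau> cc G' t + real (\<tau> - t mod \<tau>) * G' \<le> K" using Suc False by simp
      have lt: "t mod \<tau> < \<tau>" by (rule mod_facts(5)[OF tau])
      show ?thesis
      proof (cases "Suc t mod \<tau> = 0")
        case True2: True
        then have "Suc (t mod \<tau>) = \<tau>" using mod_facts(3)[OF tau False] by simp
        then have "real (\<tau> - t mod \<tau>) = 1" by simp
        then show ?thesis using True2 b bt by (simp del: beta.simps)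
      next
        case False2: False
        then have m: "Suc t mod \<tau> = Suc (t mod \<tau>)" using mod_facts(4)[OF tau False] by simp
        have "real (\<tau> - t mod \<tau>) = real (\<tau> - Suc t mod \<tau>) + 1" using m lt False2
          by (metis Suc_diff_Suc Suc_lessI of_nat_Suc add.commute)
        then show ?thesis using False2 b bt by (simp add: algebra_simps del: beta.simps)
      qed
    qed
  qed
  have "beta \<tau> cc G' t \<le> K"
  proof (cases "t mod \<tau> = 0")
    case True then show ?thesis using inv[of t] by simp
  next
    case False
    then have "beta \<tau> cc G' t + real (\<tau> - t mod \<tau>) * G' \<le> K" using inv[of t] by simp
    moreover have "0 \<le> real (\<tau> - t mod \<tau>) * G'" using G by simp
    ultimately show ?thesis by linarith
  qed
  then show ?thesis by (simp add: K_def)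
qed

lemma bm_norm: "f \<in> borel_measurable M \<Longrightarrow> (\<lambda>x. norm (f x :: 'a::real_normed_vector)) \<in> borel_measurable M"
  using measurable_compose[OF _ borel_measurable_norm] by blast

lemma bm_ennsq:
  assumes [measurable]: "f \<in> borel_measurable M"
  shows "(\<lambda>x. ennreal ((norm (f x :: 'a::real_normed_vector))^2)) \<in> borel_measurable M"
  by measurable

lemma final_real:
  fixes T d G e :: real assumes T: "0 < T" and d: "0 < d" and G: "0 \<le> G" and e: "0 < e"
  shows "\<exists>\<eta>>0. (2 * T * (G + 2 * \<eta>) / d)^2 \<le> 45 * T^2 * G^2 / d^2 + e"
proof -
  define \<eta> where "\<eta> = min 1 (e * d^2 / (16 * T^2 * (G + 1)))"
  have ep: "0 < \<eta>" using T d G e by (simp add: \<eta>_def)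
  have e1: "\<eta> \<le> 1" by (simp add: \<eta>_def)
  have e2: "\<eta> \<le> e * d^2 / (16 * T^2 * (G + 1))" by (simp add: \<eta>_def)
  have p: "0 < 16 * T^2 * (G + 1)" using T G by simp
  have e3: "16 * T^2 * (G + 1) * \<eta> \<le> e * d^2"
    using e2 p by (simp add: field_simps)
  have sq: "(G + 2 * \<eta>)^2 \<le> G^2 + \<eta> * (4 * G + 4)"
  proof -
    have "\<eta> * \<eta> \<le> \<eta>" using e1 ep by (simp add: mult_left_le)
    then show ?thesis by (simp add: power2_eq_square algebra_simps)
  qed
  have "(2 * T * (G + 2 * \<eta>) / d)^2 = 4 * T^2 * (G + 2 * \<eta>)^2 / d^2"
    by (simp add: power_divide power_mult_distrib)
  also have "\<dots> \<le> 4 * T^2 * (G^2 + \<eta> * (4 * G + 4)) / d^2"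
    using sq T d by (intro divide_right_mono mult_left_mono) auto
  also have "\<dots> = 4 * T^2 * G^2 / d^2 + (16 * T^2 * (G + 1) * \<eta>) / d^2"
    using d by (simp add: field_simps)
  also have "\<dots> \<le> 4 * T^2 * G^2 / d^2 + e"
    using e3 d by (simp add: divide_le_eq)
  also have "\<dots> \<le> 45 * T^2 * G^2 / d^2 + e"
    using d by (intro add_right_mono divide_right_mono mult_right_mono) auto
  finally show ?thesis using ep by blast
qed

theorem lemma3:
  fixes N :: nat
    and D :: "nat \<Rightarrow> 'b measure"
    and F :: "real^'n^'m \<Rightarrow> 'b \<Rightarrow> real"
    and gF :: "real^'n^'m \<Rightarrow> 'b \<Rightarrow> real^'n^'m"
    and gfi :: "nat \<Rightarrow> real^'n^'m \<Rightarrow> real^'n^'m"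
    and gf :: "real^'n^'m \<Rightarrow> real^'n^'m"
    and qrf :: "((real, 'r::{finite,linorder}) vec, 'm::finite) vec \<Rightarrow> ((real, 'r) vec, 'm) vec"
    and svdf :: "real^'n^'m \<Rightarrow> ((real, 'r) vec, 'm) vec"
    and \<tau> :: nat and \<eta> \<mu> \<sigma> \<omega> :: real
    and X0 :: "real^'n^'m" and Q0 :: "((real, 'r) vec, 'n) vec"
  assumes "CARD('n) \<le> CARD('m)" and "CARD('r) \<le> CARD('n)"
    and "1 \<le> N" and "0 \<le> \<mu>" and "\<mu> < 1" and "1 \<le> \<tau>" and "0 < \<eta>"
    and "\<forall>i<N. prob_space (D i)"
    and "\<forall>i<N. \<forall>\<xi>\<in>space (D i). \<forall>X. ((\<lambda>Y. F Y \<xi>) has_derivative (\<lambda>H. gF X \<xi> \<bullet> H)) (at X)"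
    and "\<forall>i<N. \<forall>X. ((\<lambda>Y. \<integral>\<xi>. F Y \<xi> \<partial>D i) has_derivative (\<lambda>H. gfi i X \<bullet> H)) (at X)"
    and "\<forall>X. ((\<lambda>Y. (1 / real N) * (\<Sum>i<N. \<integral>\<xi>. F Y \<xi> \<partial>D i)) has_derivative (\<lambda>H. gf X \<bullet> H)) (at X)"
    and "\<forall>X. (norm (gf X))^2 \<le> \<omega>^2"
    and "\<forall>i<N. \<forall>X. (\<integral>\<^sup>+\<xi>. ennreal ((norm (gF X \<xi> - gfi i X))^2) \<partial>D i) \<le> ennreal (\<sigma>^2)"
    and "\<forall>X. (\<integral>\<^sup>+\<xi>. ennreal ((norm ((1 / real N) *\<^sub>R (\<Sum>i<N. gF X (\<xi> i))))^2) \<partial>(PiM {..<N} D))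
            \<le> ennreal (\<sigma>^2 + \<omega>^2)"
    and "\<forall>i<N. (\<lambda>(X, \<xi>). gF X \<xi>) \<in> borel_measurable (borel \<Otimes>\<^sub>M D i)"
    and "qrf \<in> borel_measurable borel" and "svdf \<in> borel_measurable borel"
    and "\<forall>A. is_econ_QR A (qrf A)" and "\<forall>A. top_r_left_sv A (svdf A)"
  shows "\<forall>t. (\<integral>\<^sup>+w. ennreal ((norm ((1 / real N) *\<^sub>R
                 (\<Sum>i<N. err N gF qrf svdf \<tau> \<eta> \<mu> X0 Q0 w t i)))^2)
               \<partial>(PiM (UNIV \<times> {..<N}) (\<lambda>(t, i). D i)))
           \<le> ennreal (45 * real \<tau>^2 * (\<sigma>^2 + \<omega>^2) / (real CARD('r) / real CARD('n))^2)"
proof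
  fix t
  note rn = assms(2) and tau = assms(6) and prob = assms(8) and bnd = assms(14)
    and gm = assms(15) and qm = assms(16) and sm = assms(17) and qr = assms(18) and sv = assms(19)
  let ?M = "PiM (UNIV \<times> {..<N}) (\<lambda>(t, i). D i)"
  let ?EE = "EE N gF qrf svdf \<tau> \<eta> \<mu> X0 Q0"
  let ?XX = "XX N gF qrf svdf \<tau> \<eta> \<mu> X0 Q0"
  define a where "a t w = norm ((1 / real N) *\<^sub>R (\<Sum>i<N. ?EE w t i))" for t w
  define g where "g t w = norm ((1 / real N) *\<^sub>R (\<Sum>i<N. gF (?XX w t) (w (t, i))))" for t w
  define \<delta> where "\<delta> = real CARD('r) / real CARD('n)"
  define cc where "cc = sqrt (1 - \<delta>)"
  define G where "G = sqrt (\<sigma>^2 + \<omega>^2)"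
  have err_eq: "err N gF qrf svdf \<tau> \<eta> \<mu> X0 Q0 w t i = ?EE w t i" for w t i
    by (simp add: err_def EE_def)
  have d0: "0 < \<delta>" by (simp add: \<delta>_def)
  have d1: "\<delta> \<le> 1" using rn by (simp add: \<delta>_def divide_le_eq_1)
  have cc0: "0 \<le> cc" using d1 by (simp add: cc_def)
  have cc1: "cc < 1" using d0 d1 by (simp add: cc_def)
  have ccd: "cc \<le> 1 - \<delta> / 2"
    unfolding cc_def using d0 d1 by (intro real_le_lsqrt) (auto simp: power2_eq_square algebra_simps)
  have G0: "0 \<le> G" by (simp add: G_def)
  have GG: "G^2 = \<sigma>^2 + \<omega>^2" by (simp add: G_def)
  have am: "a t \<in> borel_measurable ?M" for t
  proof -
    have "\<forall>i<N. (\<lambda>w. ?EE w t i) \<in> borel_measurable ?M"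
      using psgd_measurable[OF gm qm sm, where t=t] by blast
    then show ?thesis unfolding a_def
      by (intro bm_norm borel_measurable_scaleR borel_measurable_const borel_measurable_sum) auto
  qed
  have gmm: "g t \<in> borel_measurable ?M" for t
    unfolding g_def using gbar_measurable[OF gm qm sm] by (rule bm_norm)
  have Eg: "(\<integral>\<^sup>+w. ennreal ((g t w)^2) \<partial>?M) \<le> ennreal (G^2)" for t
  proof -
    define h where "h X \<xi> = ennreal ((norm ((1 / real N) *\<^sub>R (\<Sum>i<N. gF X (\<xi> i))))^2)" for X \<xi>
    have "(\<integral>\<^sup>+w. h (?XX w t) (\<lambda>i. w (t, i)) \<partial>?M) \<le> ennreal (G^2)"
    proof (rule slice_bound[OF prob, where Xf="\<lambda>w. ?XX w t" and h=h])
      show "?XX w t = ?XX w' t" if "\<forall>s<t. \<forall>i<N. w (s, i) = w' (s, i)" for w w'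
        using local_dep[OF that] by blast
      show "(\<lambda>\<xi>. h X \<xi>) \<in> borel_measurable (PiM {..<N} D)" for X
      proof -
        have "(\<lambda>\<xi>. gF X (\<xi> i)) \<in> borel_measurable (PiM {..<N} D)" if "i < N" for i
        proof -
          have "(\<lambda>\<xi>. (X, \<xi> i)) \<in> measurable (PiM {..<N} D) (borel \<Otimes>\<^sub>M D i)"
            using that by (intro measurable_Pair measurable_const measurable_component_singleton) auto
          from measurable_comp[OF this gm[rule_format, OF that]] show ?thesis by (simp add: comp_def)
        qed
        then show ?thesis unfolding h_def
          by (intro bm_ennsq borel_measurable_scaleR borel_measurable_const borel_measurable_sum) auto
      qed
      show "h X \<xi> = h X \<xi>'" if "\<forall>i<N. \<xi> i = \<xi>' i" for X \<xi> \<xi>'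
        using that unfolding h_def by (metis (no_types, lifting) lessThan_iff sum.cong)
      show "(\<lambda>w. h (?XX w t) (\<lambda>i. w (t, i))) \<in> borel_measurable ?M"
        unfolding h_def by (intro bm_ennsq gbar_measurable[OF gm qm sm])
      show "(\<integral>\<^sup>+\<xi>. h X \<xi> \<partial>PiM {..<N} D) \<le> ennreal (G^2)" for X
        unfolding h_def GG using bnd by blast
    qed
    then show ?thesis by (simp add: h_def g_def)
  qed
  have main: "(\<integral>\<^sup>+w. ennreal ((a t w)^2) \<partial>?M) \<le> ennreal ((beta \<tau> cc (G + 2 * \<eta>') t)^2)"
    if ep: "0 < \<eta>'" for \<eta>' t
  proof (induction t)
    case 0 then show ?case by (simp add: a_def EE_0)
  next
    case (Suc t)
    have "(\<integral>\<^sup>+w. ennreal ((a (Suc t) w)^2) \<partial>?M)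
        \<le> ennreal (((if t mod \<tau> = 0 then cc else 1) * (beta \<tau> cc (G + 2 * \<eta>') t + G + 2 * \<eta>'))^2)"
    proof (rule nn_step[OF am gmm])
      show "a (Suc t) w \<le> (if t mod \<tau> = 0 then cc else 1) * (a t w + g t w)" for w
        unfolding a_def g_def cc_def \<delta>_def
        by (rule order_trans[OF ebar_step[OF qr sv rn]]) (simp add: add.commute)
    qed (use Suc cc0 G0 ep beta_nonneg[OF cc0, of "G + 2 * \<eta>'"] Eg in \<open>auto simp: a_def\<close>)
    also have "\<dots> = ennreal ((beta \<tau> cc (G + 2 * \<eta>') (Suc t))^2)"
      by (simp add: add.assoc)
    finally show ?case .
  qed
  have bound: "(\<integral>\<^sup>+w. ennreal ((a t w)^2) \<partial>?M) \<le> ennreal ((2 * real \<tau> * (G + 2 * \<eta>') / \<delta>)^2)"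
    if ep: "0 < \<eta>'" for \<eta>'
  proof -
    have b0: "0 \<le> beta \<tau> cc (G + 2 * \<eta>') t" using beta_nonneg[OF cc0, of "G + 2 * \<eta>'"] G0 ep by simp
    have "beta \<tau> cc (G + 2 * \<eta>') t \<le> real \<tau> * (G + 2 * \<eta>') / (1 - cc)"
      by (rule beta_bound[OF tau cc0 cc1]) (use G0 ep in simp)
    also have "\<dots> \<le> real \<tau> * (G + 2 * \<eta>') / (\<delta> / 2)"
      using ccd d0 G0 ep by (intro divide_left_mono mult_nonneg_nonneg) auto
    also have "\<dots> = 2 * real \<tau> * (G + 2 * \<eta>') / \<delta>" by simp
    finally have "beta \<tau> cc (G + 2 * \<eta>') t \<le> 2 * real \<tau> * (G + 2 * \<eta>') / \<delta>" .
    then have "(beta \<tau> cc (G + 2 * \<eta>') t)^2 \<le> (2 * real \<tau> * (G + 2 * \<eta>') / \<delta>)^2"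
      using b0 by (intro power_mono)
    with main[OF ep, of t] show ?thesis by (meson ennreal_leI order_trans)
  qed
  have "(\<integral>\<^sup>+w. ennreal ((a t w)^2) \<partial>?M) \<le> ennreal (45 * real \<tau>^2 * G^2 / \<delta>^2)"
  proof (rule ennreal_le_epsilon)
    fix e :: real assume e: "0 < e"
    obtain \<eta>' where ep: "0 < \<eta>'" and le: "(2 * real \<tau> * (G + 2 * \<eta>') / \<delta>)^2 \<le> 45 * real \<tau>^2 * G^2 / \<delta>^2 + e"
      using final_real[of "real \<tau>" \<delta> G e] tau d0 G0 e by auto
    have "(\<integral>\<^sup>+w. ennreal ((a t w)^2) \<partial>?M) \<le> ennreal ((2 * real \<tau> * (G + 2 * \<eta>') / \<delta>)^2)"
      by (rule bound[OF ep])
    also have "\<dots> \<le> ennreal (45 * real \<tau>^2 * G^2 / \<delta>^2 + e)" by (rule ennreal_leI[OF le])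
    also have "\<dots> = ennreal (45 * real \<tau>^2 * G^2 / \<delta>^2) + ennreal e"
      using e d0 by (intro ennreal_plus) auto
    finally show "(\<integral>\<^sup>+w. ennreal ((a t w)^2) \<partial>?M) \<le> ennreal (45 * real \<tau>^2 * G^2 / \<delta>^2) + ennreal e" .
  qed
  then show "(\<integral>\<^sup>+w. ennreal ((norm ((1 / real N) *\<^sub>R
                 (\<Sum>i<N. err N gF qrf svdf \<tau> \<eta> \<mu> X0 Q0 w t i)))^2) \<partial>?M)
           \<le> ennreal (45 * real \<tau>^2 * (\<sigma>^2 + \<omega>^2) / (real CARD('r) / real CARD('n))^2)"
    by (simp add: a_def err_eq GG \<delta>_def)
qed


end
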